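(* Let $n\ge2$, let $x_1,\dots,x_l\in\mathbb{C}$ be pairwise distinct, and for each $i$ let $e^i_1,\dots,e^i_{r_i}$ be positive integers with $m_i=\sum_j e^i_j$ and $\sum_i m_i=n$, such that at least one $e^i_j>1$. Let $\mathcal{P}=\bigoplus_{i,j}M^{e^i_j}(x_i)$ and let $\mathcal{P}'=\bigoplus_i\bigoplus_{j'=1}^{m_i}M^1(x_i)$ be the diagonal pencil obtained from $\mathcal{P}$ by deleting all off-diagonal entries. Let $|\psi\rangle$, $|\psi'\rangle\in\mathbb{C}^2\otimes\mathbb{C}^n\otimes\mathbb{C}^n$ be the states corresponding to $\mathcal{P}$ and $\mathcal{P}'$, and let $\mathcal{C}=G|\psi\rangle$ be the SLOCC class of $|\psi\rangle$. Then: (i) if $|\psi'\rangle$ is semistable, then $\mathcal{C}$ is strictly semistable; (ii) if $|\psi'\rangle$ is in the null-cone, then $\mathcal{C}$ is in the null-cone.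
   Context: $G=SL(2,\mathbb{C})\times SL(n,\mathbb{C})\times SL(n,\mathbb{C})$ acts by $A\otimes B\otimes C$. To an $n\times n$ matrix pencil $\mathcal{P}=\mu R+\lambda S$ ($R,S$ complex $n\times n$ matrices, $\lambda,\mu$ formal variables) corresponds the state $|0\rangle\sum_{j,k}R_{jk}|j\rangle|k\rangle+|1\rangle\sum_{j,k}S_{jk}|j\rangle|k\rangle$. For $e\ge1$ and $x\in\mathbb{C}$, $M^e(x)$ is the $e\times e$ pencil with diagonal entries $x\mu+\lambda$, entries $\mu$ on the first superdiagonal, and zeros elsewhere. The null-cone is the set of vectors $|\phi\rangle$ with $0\in\overline{G|\phi\rangle}$ (standard topology); vectors outside it are semistable; a semistable vector is polystable if its orbit is closed, and strictly semistable if it is semistable but not polystable. *)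

theory Defs
  imports "HOL-Analysis.Function_Topology" "Jordan_Normal_Form.Jordan_Normal_Form"
begin

text \<open>A vector of C^2 (x) C^n (x) C^n is represented as a function T a j k with
  a < 2, j < n, k < n, vanishing outside this range.  The standard topology is the
  product topology on such functions (all other coordinates are identically zero).\<close>

definition tensor_act ::
  "nat \<Rightarrow> complex mat \<Rightarrow> complex mat \<Rightarrow> complex mat \<Rightarrow> (nat \<Rightarrow> nat \<Rightarrow> nat \<Rightarrow> complex)
     \<Rightarrow> (nat \<Rightarrow> nat \<Rightarrow> nat \<Rightarrow> complex)" where
  "tensor_act n A B C T = (\<lambda>a j k. if a < 2 \<and> j < n \<and> k < n then
      (\<Sum>a'<2. \<Sum>j'<n. \<Sum>k'<n. A $$ (a,a') * B $$ (j,j') * C $$ (k,k') * T a' j' k')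
     else 0)"

definition SLOCC_group :: "nat \<Rightarrow> (complex mat \<times> complex mat \<times> complex mat) set" where
  "SLOCC_group n = {(A, B, C). A \<in> carrier_mat 2 2 \<and> Determinant.det A = 1 \<and>
      B \<in> carrier_mat n n \<and> Determinant.det B = 1 \<and>
      C \<in> carrier_mat n n \<and> Determinant.det C = 1}"

definition SLOCC_orbit :: "nat \<Rightarrow> (nat \<Rightarrow> nat \<Rightarrow> nat \<Rightarrow> complex) \<Rightarrow> (nat \<Rightarrow> nat \<Rightarrow> nat \<Rightarrow> complex) set" where
  "SLOCC_orbit n T = (\<lambda>(A, B, C). tensor_act n A B C T) ` SLOCC_group n"

definition in_null_cone :: "nat \<Rightarrow> (nat \<Rightarrow> nat \<Rightarrow> nat \<Rightarrow> complex) \<Rightarrow> bool" where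
  "in_null_cone n T \<longleftrightarrow> (\<lambda>_ _ _. 0) \<in> closure (SLOCC_orbit n T)"

definition semistable :: "nat \<Rightarrow> (nat \<Rightarrow> nat \<Rightarrow> nat \<Rightarrow> complex) \<Rightarrow> bool" where
  "semistable n T \<longleftrightarrow> \<not> in_null_cone n T"

definition polystable :: "nat \<Rightarrow> (nat \<Rightarrow> nat \<Rightarrow> nat \<Rightarrow> complex) \<Rightarrow> bool" where
  "polystable n T \<longleftrightarrow> semistable n T \<and> closed (SLOCC_orbit n T)"

definition strictly_semistable :: "nat \<Rightarrow> (nat \<Rightarrow> nat \<Rightarrow> nat \<Rightarrow> complex) \<Rightarrow> bool" where
  "strictly_semistable n T \<longleftrightarrow> semistable n T \<and> \<not> polystable n T"

text \<open>State |0>(sum R_jk |j>|k>) + |1>(sum S_jk |j>|k>) of the n x n pencil mu R + lambda S.\<close>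
definition pencil_state :: "nat \<Rightarrow> complex mat \<Rightarrow> complex mat \<Rightarrow> (nat \<Rightarrow> nat \<Rightarrow> nat \<Rightarrow> complex)" where
  "pencil_state n R S = (\<lambda>a j k. if j < n \<and> k < n then
      (if a = 0 then R $$ (j,k) else if a = 1 then S $$ (j,k) else 0) else 0)"

text \<open>A pencil is a pair (R, S) representing mu R + lambda S.
  M^e(x) has mu-coefficient jordan_block e x (x on the diagonal, 1 on the first
  superdiagonal) and lambda-coefficient the identity.  Direct sums of M^{e_b}(x_b)
  for a list of blocks (e_b, x_b) are block-diagonal.\<close>
definition M_pencil_sum :: "(nat \<times> complex) list \<Rightarrow> complex mat \<times> complex mat" where
  "M_pencil_sum bs = (jordan_matrix bs, 1\<^sub>m (sum_list (map fst bs)))"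

end

theory Submission
  imports Defs "Jordan_Normal_Form.Jordan_Normal_Form_Uniqueness"
begin


type_synonym tens = "nat \<Rightarrow> nat \<Rightarrow> nat \<Rightarrow> complex"
definition vanish :: "nat \<Rightarrow> tens \<Rightarrow> bool" where
  "vanish n T \<longleftrightarrow> (\<forall>a j k. \<not> (a < 2 \<and> j < n \<and> k < n) \<longrightarrow> T a j k = 0)"

lemma vanish_tensor: "vanish n (tensor_act n A B C T)"
  unfolding vanish_def tensor_act_def by auto

lemma vanish_pencil: "vanish n (pencil_state n R S)"
  unfolding vanish_def pencil_state_def by auto

lemma tensor_scale:
  assumes "\<And>j j'. j < n \<Longrightarrow> j' < n \<Longrightarrow> B' $$ (j,j') = B $$ (j,j') * d j'"
    and "\<And>j j'. j < n \<Longrightarrow> j' < n \<Longrightarrow> C' $$ (j,j') = C $$ (j,j') * e j'"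
  shows "tensor_act n A B' C' T = tensor_act n A B C (\<lambda>a j k. d j * e k * T a j k)"
  unfolding tensor_act_def
  by (intro ext) (auto simp: assms mult_ac intro!: sum.cong)

lemma tensor_A_only:
  assumes "a < 2" "j < n" "k < n"
  shows "tensor_act n A (1\<^sub>m n) (1\<^sub>m n) T a j k = (\<Sum>a'<2. A $$ (a,a') * T a' j k)"
proof -
  have inner: "(\<Sum>j'<n. \<Sum>k'<n. c * (1\<^sub>m n) $$ (j,j') * (1\<^sub>m n) $$ (k,k') * T a' j' k') = c * T a' j k"
    for c a'
  proof -
    have "(\<Sum>j'<n. \<Sum>k'<n. c * (1\<^sub>m n) $$ (j,j') * (1\<^sub>m n) $$ (k,k') * T a' j' k')
        = (\<Sum>j'<n. \<Sum>k'<n. if j' = j then (if k' = k then c * T a' j' k' else 0) else 0)"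
    proof (intro sum.cong refl)
      fix j' k' assume "j' \<in> {..<n}" "k' \<in> {..<n}"
      then show "c * (1\<^sub>m n) $$ (j,j') * (1\<^sub>m n) $$ (k,k') * T a' j' k' = (if j' = j then (if k' = k then c * T a' j' k' else 0) else 0)"
        using assms by (auto simp: index_one_mat)
    qed
    also have "\<dots> = (\<Sum>j'<n. if j' = j then (\<Sum>k'<n. if k' = k then c * T a' j' k' else 0) else 0)"
      by (intro sum.cong refl) simp
    also have "\<dots> = c * T a' j k" using assms by simp
    finally show ?thesis .
  qed
  have "tensor_act n A (1\<^sub>m n) (1\<^sub>m n) T a j k
     = (\<Sum>a'<2. \<Sum>j'<n. \<Sum>k'<n. A $$ (a,a') * (1\<^sub>m n) $$ (j,j') * (1\<^sub>m n) $$ (k,k') * T a' j' k')"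
    using assms unfolding tensor_act_def by (simp del: index_one_mat)
  also have "\<dots> = (\<Sum>a'<2. A $$ (a,a') * T a' j k)" by (simp only: inner)
  finally show ?thesis .
qed

lemma mult3_index:
  assumes "B \<in> carrier_mat n n" "M \<in> carrier_mat n n" "C \<in> carrier_mat n n" "j < n" "k < n"
  shows "(B * M * transpose_mat C) $$ (j,k) = (\<Sum>j'<n. \<Sum>k'<n. B $$ (j,j') * M $$ (j',k') * C $$ (k,k'))"
proof -
  have "(B * M * transpose_mat C) $$ (j,k) = (\<Sum>i<n. B $$ (j,i) * (\<Sum>l<n. M $$ (i,l) * C $$ (k,l)))"
    using assms by (simp add: scalar_prod_def atLeast0LessThan)
  also have "\<dots> = (\<Sum>j'<n. \<Sum>k'<n. B $$ (j,j') * M $$ (j',k') * C $$ (k,k'))"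
    by (simp add: sum_distrib_left mult.assoc)
  finally show ?thesis .
qed

lemma tensor_pencil_slice:
  assumes "R \<in> carrier_mat n n" "S \<in> carrier_mat n n" "B \<in> carrier_mat n n" "C \<in> carrier_mat n n"
    "a < 2" "j < n" "k < n"
  shows "tensor_act n A B C (pencil_state n R S) a j k
     = (B * (A $$ (a,0) \<cdot>\<^sub>m R + A $$ (a,1) \<cdot>\<^sub>m S) * transpose_mat C) $$ (j,k)"
proof -
  have "(B * (A $$ (a,0) \<cdot>\<^sub>m R + A $$ (a,1) \<cdot>\<^sub>m S) * transpose_mat C) $$ (j,k)
     = (\<Sum>j'<n. \<Sum>k'<n. B $$ (j,j') * (A $$ (a,0) \<cdot>\<^sub>m R + A $$ (a,1) \<cdot>\<^sub>m S) $$ (j',k') * C $$ (k,k'))"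
    using assms by (intro mult3_index) auto
  also have "\<dots> = (\<Sum>j'<n. \<Sum>k'<n. B $$ (j,j') * (A $$ (a,0) * R $$ (j',k') + A $$ (a,1) * S $$ (j',k')) * C $$ (k,k'))"
    using assms by (intro sum.cong refl) auto
  also have "\<dots> = tensor_act n A B C (pencil_state n R S) a j k"
    using assms unfolding tensor_act_def pencil_state_def
    by (simp add: numeral_2_eq_2 lessThan_Suc sum.distrib algebra_simps sum_distrib_left)
  finally show ?thesis by simp
qed





lemma tendsto_fun_iff:
  fixes f :: "'x \<Rightarrow> 'a \<Rightarrow> 'b::topological_space"
  shows "(f \<longlongrightarrow> l) F \<longleftrightarrow> (\<forall>i. ((\<lambda>c. f c i) \<longlongrightarrow> l i) F)"
proof -
  have "(f \<longlongrightarrow> l) F \<longleftrightarrow> limitin (product_topology (\<lambda>_. euclidean) UNIV) f l F"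
    by (simp add: euclidean_product_topology)
  also have "\<dots> \<longleftrightarrow> (\<forall>i. ((\<lambda>c. f c i) \<longlongrightarrow> l i) F)"
    by (subst limitin_componentwise) auto
  finally show ?thesis .
qed

lemma tendsto_tens_iff:
  fixes f :: "'x \<Rightarrow> tens"
  shows "(f \<longlongrightarrow> l) F \<longleftrightarrow> (\<forall>a j k. ((\<lambda>c. f c a j k) \<longlongrightarrow> l a j k) F)"
  by (simp add: tendsto_fun_iff)

lemma closure_coordD:
  fixes p :: tens
  assumes "p \<in> closure S" "\<eta> > 0"
  shows "\<exists>T\<in>S. \<forall>a<2. \<forall>j<n. \<forall>k<n. cmod (T a j k - p a j k) < \<eta>"
proof -
  obtain x where x: "\<And>m. x m \<in> S" "x \<longlonglongrightarrow> p"
    using assms(1) closure_sequential by blast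
  have c: "\<And>a j k. (\<lambda>m. x m a j k) \<longlonglongrightarrow> p a j k" using x(2) tendsto_tens_iff by blast
  have ev: "\<And>a j k. eventually (\<lambda>m. cmod (x m a j k - p a j k) < \<eta>) sequentially"
  proof -
    fix a j k
    have "eventually (\<lambda>m. dist (x m a j k) (p a j k) < \<eta>) sequentially"
      using c tendstoD assms(2) by blast
    then show "eventually (\<lambda>m. cmod (x m a j k - p a j k) < \<eta>) sequentially"
      by (simp add: dist_norm)
  qed
  define P where "P = (\<lambda>(t::nat\<times>nat\<times>nat) m. case t of (a, j, k) \<Rightarrow> cmod (x m a j k - p a j k) < \<eta>)"
  have all: "\<forall>t\<in>{..<2::nat}\<times>{..<n}\<times>{..<n}. eventually (P t) sequentially"
  proof
    fix t :: "nat\<times>nat\<times>nat"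
    obtain a j k where t: "t = (a, j, k)" by (cases t) auto
    show "eventually (P t) sequentially" unfolding t P_def using ev[of a j k] by simp
  qed
  have "eventually (\<lambda>m. \<forall>t\<in>{..<2::nat}\<times>{..<n}\<times>{..<n}. P t m) sequentially"
    by (rule eventually_ball_finite[OF _ all]) simp
  then obtain N where N: "\<And>m. m \<ge> N \<Longrightarrow> \<forall>t\<in>{..<2::nat}\<times>{..<n}\<times>{..<n}. P t m"
    unfolding eventually_sequentially by blast
  define m where "m = N"
  have m: "\<forall>t\<in>{..<2::nat}\<times>{..<n}\<times>{..<n}. P t m" using N[of N] by (simp add: m_def)
  have "\<forall>a<2. \<forall>j<n. \<forall>k<n. cmod (x m a j k - p a j k) < \<eta>"
  proof (intro allI impI)
    fix a j k assume "a < (2::nat)" "j < n" "k < n"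
    then have "(a, j, k) \<in> {..<2::nat}\<times>{..<n}\<times>{..<n}" by simp
    from m[rule_format, OF this] show "cmod (x m a j k - p a j k) < \<eta>" by (simp add: P_def)
  qed
  then show ?thesis using x(1) by blast
qed

lemma closure_coordI:
  fixes p :: tens
  assumes H: "\<And>\<eta>. \<eta> > 0 \<Longrightarrow> \<exists>T\<in>S. \<forall>a<2. \<forall>j<n. \<forall>k<n. cmod (T a j k - p a j k) < \<eta>"
    and V: "\<And>T. T \<in> S \<Longrightarrow> vanish n T" and Vp: "vanish n p"
  shows "p \<in> closure S"
proof -
  have "\<forall>m. \<exists>T. T \<in> S \<and> (\<forall>a<2. \<forall>j<n. \<forall>k<n. cmod (T a j k - p a j k) < 1 / (real m + 1))"
  proof
    fix m
    have "(0::real) < 1 / (real m + 1)" by simp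
    then show "\<exists>T. T \<in> S \<and> (\<forall>a<2. \<forall>j<n. \<forall>k<n. cmod (T a j k - p a j k) < 1 / (real m + 1))"
      using H by blast
  qed
  then have "\<exists>x. \<forall>m. x m \<in> S \<and> (\<forall>a<2. \<forall>j<n. \<forall>k<n. cmod (x m a j k - p a j k) < 1 / (real m + 1))"
    by (rule choice)
  then obtain x where xx: "\<forall>m. x m \<in> S \<and> (\<forall>a<2. \<forall>j<n. \<forall>k<n. cmod (x m a j k - p a j k) < 1 / (real m + 1))"
    by blast
  have x1: "\<And>m. x m \<in> S" using xx by blast
  have x2: "\<And>m a j k. a < 2 \<Longrightarrow> j < n \<Longrightarrow> k < n \<Longrightarrow> cmod (x m a j k - p a j k) < 1 / (real m + 1)"
    using xx by blast
  note x = x1 x2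
  have "x \<longlonglongrightarrow> p"
    unfolding tendsto_tens_iff
  proof (intro allI)
    fix a j k
    show "(\<lambda>m. x m a j k) \<longlonglongrightarrow> p a j k"
    proof (cases "a < 2 \<and> j < n \<and> k < n")
      case True
      have "(\<lambda>m. x m a j k - p a j k) \<longlonglongrightarrow> 0"
      proof (rule tendsto_norm_zero_cancel, rule tendsto_sandwich[OF _ _ tendsto_const LIMSEQ_inverse_real_of_nat])
        show "\<forall>\<^sub>F m in sequentially. norm (x m a j k - p a j k) \<le> inverse (real (Suc m))"
        proof (rule always_eventually, rule allI)
          fix m
          have "norm (x m a j k - p a j k) < 1 / (real m + 1)" using x(2)[of a j k] True by blast
          then show "norm (x m a j k - p a j k) \<le> inverse (real (Suc m))"
            by (simp add: inverse_eq_divide add.commute)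
        qed
        show "\<forall>\<^sub>F m in sequentially. 0 \<le> norm (x m a j k - p a j k)"
          by simp
      qed
      then show ?thesis by (simp add: LIM_zero_iff)
    next
      case False
      then show ?thesis using V[OF x(1)] Vp unfolding vanish_def by simp
    qed
  qed
  then show ?thesis using x(1) closure_sequential by blast
qed



definition dl :: "(nat \<times> complex) list \<Rightarrow> complex list" where
  "dl bs = concat (map (\<lambda>(k,a). replicate k a) bs)"

lemma length_dl: "length (dl bs) = sum_list (map fst bs)"
  unfolding dl_def by (induct bs) auto

lemma jm_entries:
  assumes "i < sum_list (map fst bs)" "j < sum_list (map fst bs)"
  shows "jordan_matrix bs $$ (i,i) = dl bs ! i
     \<and> (j \<noteq> i \<longrightarrow> j \<noteq> Suc i \<longrightarrow> jordan_matrix bs $$ (i,j) = 0)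
     \<and> (j = Suc i \<longrightarrow> jordan_matrix bs $$ (i,j) = 0 \<or> jordan_matrix bs $$ (i,j) = 1)"
  using assms
proof (induct bs arbitrary: i j)
  case Nil
  then show ?case by simp
next
  case (Cons b bs)
  obtain k a where b: "b = (k,a)" by force
  let ?N = "sum_list (map fst bs)"
  have J: "jordan_matrix (b # bs) = four_block_mat (jordan_block k a) (0\<^sub>m k ?N) (0\<^sub>m ?N k) (jordan_matrix bs)"
    unfolding b by (rule jordan_matrix_Cons)
  have dlc: "dl (b # bs) = replicate k a @ dl bs" unfolding dl_def b by simp
  have ij: "i < k + ?N" "j < k + ?N" using Cons.prems b by auto
  have ii: "jordan_matrix (b # bs) $$ (i,i) = dl (b # bs) ! i"
  proof (cases "i < k")
    case True then show ?thesis using ij unfolding J dlc by (simp add: nth_append)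
  next
    case False
    then have "i - k < ?N" using ij by auto
    from Cons.hyps[OF this this] False ij show ?thesis unfolding J dlc by (simp add: nth_append length_dl)
  qed
  have ij2: "jordan_matrix (b # bs) $$ (i,j) = (if i < k then (if j < k then jordan_block k a $$ (i,j) else 0)
      else if j < k then 0 else jordan_matrix bs $$ (i - k, j - k))"
    using ij unfolding J by simp
  show ?case
  proof (intro conjI impI)
    show "jordan_matrix (b # bs) $$ (i,i) = dl (b # bs) ! i" by (rule ii)
  next
    assume "j \<noteq> i" "j \<noteq> Suc i"
    then show "jordan_matrix (b # bs) $$ (i,j) = 0"
    proof (cases "i < k")
      case True then show ?thesis using \<open>j \<noteq> i\<close> \<open>j \<noteq> Suc i\<close> unfolding ij2 by (simp add: jordan_block_def)
    next
      case False
      show ?thesis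
      proof (cases "j < k")
        case True then show ?thesis using False unfolding ij2 by simp
      next
        case False2: False
        have "i - k < ?N" "j - k < ?N" using ij False False2 by auto
        from Cons.hyps[OF this] False False2 \<open>j \<noteq> i\<close> \<open>j \<noteq> Suc i\<close> show ?thesis unfolding ij2 by auto
      qed
    qed
  next
    assume js: "j = Suc i"
    show "jordan_matrix (b # bs) $$ (i,j) = 0 \<or> jordan_matrix (b # bs) $$ (i,j) = 1"
    proof (cases "i < k")
      case True then show ?thesis using js unfolding ij2 by (simp add: jordan_block_def)
    next
      case False
      have "i - k < ?N" "j - k < ?N" using ij False js by auto
      from Cons.hyps[OF this] False js show ?thesis unfolding ij2 by (auto simp: Suc_diff_le)
    qed
  qed
qed

lemma jm_ones:
  assumes "i < length gs" "j < length gs"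
  shows "jordan_matrix (map (\<lambda>g. (1::nat, g)) gs) $$ (i,j) = (if i = j then gs ! i else 0)"
  using assms
proof (induct gs arbitrary: i j)
  case Nil
  then show ?case by simp
next
  case (Cons g gs)
  have sl: "sum_list (map fst (map (\<lambda>g. (1::nat, g)) gs)) = length gs" by (induct gs) auto
  have sl2: "sum_list (map (fst \<circ> Pair (Suc 0)) gs) = length gs" by (induct gs) auto
  have J: "jordan_matrix (map (\<lambda>g. (1::nat, g)) (g # gs)) = four_block_mat (jordan_block 1 g)
     (0\<^sub>m 1 (length gs)) (0\<^sub>m (length gs) 1) (jordan_matrix (map (\<lambda>g. (1::nat, g)) gs))"
    using jordan_matrix_Cons[of 1 g "map (\<lambda>g. (1::nat, g)) gs"] by (simp add: sl sl2)
  show ?case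
  proof (cases "i = 0")
    case True then show ?thesis using Cons.prems unfolding J by (simp add: sl sl2 jordan_block_def)
  next
    case False
    show ?thesis
    proof (cases "j = 0")
      case True then show ?thesis using Cons.prems False unfolding J by (simp add: sl sl2)
    next
      case False2: False
      have "i - 1 < length gs" "j - 1 < length gs" using Cons.prems False False2 by auto
      from Cons.hyps[OF this] Cons.prems False False2 show ?thesis unfolding J
        by (auto simp add: sl sl2 nth_Cons')
    qed
  qed
qed



definition Dmat :: "nat \<Rightarrow> (nat \<Rightarrow> complex) \<Rightarrow> complex mat" where
  "Dmat n f = mat n n (\<lambda>(i,j). if i = j then f i else 0)"

lemma Dmat_carrier[simp]: "Dmat n f \<in> carrier_mat n n"
  unfolding Dmat_def by simp

lemma Dmat_index[simp]: "i < n \<Longrightarrow> j < n \<Longrightarrow> Dmat n f $$ (i,j) = (if i = j then f i else 0)"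
  unfolding Dmat_def by simp

lemma Dmat_dim[simp]: "dim_row (Dmat n f) = n" "dim_col (Dmat n f) = n"
  unfolding Dmat_def by simp_all

lemma det_Dmat: "det (Dmat n f) = (\<Prod>i<n. f i)"
proof -
  have "upper_triangular (Dmat n f)" unfolding upper_triangular_def by simp
  then have "det (Dmat n f) = prod_list (diag_mat (Dmat n f))"
    by (rule det_upper_triangular[OF _ Dmat_carrier])
  also have "diag_mat (Dmat n f) = map f [0..<n]" unfolding diag_mat_def by simp
  also have "prod_list (map f [0..<n]) = (\<Prod>i<n. f i)"
    by (induct n) simp_all
  finally show ?thesis .
qed

lemma Dmat_mult: "Dmat n f * Dmat n g = Dmat n (\<lambda>i. f i * g i)"
proof (rule eq_matI)
  fix i j assume ij: "i < dim_row (Dmat n (\<lambda>i. f i * g i))" "j < dim_col (Dmat n (\<lambda>i. f i * g i))"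
  then have "i < n" "j < n" by auto
  have "(Dmat n f * Dmat n g) $$ (i,j) = (\<Sum>k<n. Dmat n f $$ (i,k) * Dmat n g $$ (k,j))"
    using \<open>i<n\<close> \<open>j<n\<close> by (simp add: scalar_prod_def atLeast0LessThan)
  also have "\<dots> = (\<Sum>k<n. if k = i then f i * Dmat n g $$ (i,j) else 0)"
    by (intro sum.cong refl) (auto simp: \<open>i<n\<close>)
  also have "\<dots> = Dmat n (\<lambda>i. f i * g i) $$ (i,j)" using \<open>i<n\<close> \<open>j<n\<close> by simp
  finally show "(Dmat n f * Dmat n g) $$ (i,j) = Dmat n (\<lambda>i. f i * g i) $$ (i,j)" .
qed auto

lemma Dmat_one: "(\<And>i. i < n \<Longrightarrow> f i = 1) \<Longrightarrow> Dmat n f = 1\<^sub>m n"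
  by (intro eq_matI) auto

lemma diag_similar:
  fixes J B C :: "complex mat"
  assumes J: "J \<in> carrier_mat n n" and B: "B \<in> carrier_mat n n" and C: "C \<in> carrier_mat n n"
    and BJC: "B * J * transpose_mat C = Dmat n \<alpha>"
    and BC: "B * transpose_mat C = Dmat n \<beta>"
    and dB: "det B = 1" and dC: "det C = 1"
  shows "similar_mat J (Dmat n (\<lambda>i. \<alpha> i / \<beta> i))"
proof -
  have CT: "transpose_mat C \<in> carrier_mat n n" using C by simp
  have "det (Dmat n \<beta>) = 1"
    using det_mult[OF B CT] BC dB det_transpose[OF C] dC by simp
  then have bnz: "\<And>i. i < n \<Longrightarrow> \<beta> i \<noteq> 0" unfolding det_Dmat
    by (metis finite_lessThan lessThan_iff prod_zero_iff zero_neq_one)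
  define Q where "Q = Dmat n (\<lambda>i. 1 / \<beta> i) * B"
  have Q: "Q \<in> carrier_mat n n" unfolding Q_def by (rule mult_carrier_mat[OF Dmat_carrier B])
  have QC: "Q * transpose_mat C = 1\<^sub>m n"
  proof -
    have "Q * transpose_mat C = Dmat n (\<lambda>i. 1 / \<beta> i) * (B * transpose_mat C)"
      unfolding Q_def by (rule assoc_mult_mat[OF Dmat_carrier B CT])
    also have "\<dots> = Dmat n (\<lambda>i. 1 / \<beta> i * \<beta> i)" unfolding BC Dmat_mult ..
    also have "\<dots> = 1\<^sub>m n" by (rule Dmat_one) (simp add: bnz)
    finally show ?thesis .
  qed
  have CQ: "transpose_mat C * Q = 1\<^sub>m n"
    by (rule mat_mult_left_right_inverse[OF Q CT QC])
  have QJC: "Q * J * transpose_mat C = Dmat n (\<lambda>i. \<alpha> i / \<beta> i)"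
  proof -
    have "Q * J * transpose_mat C = Dmat n (\<lambda>i. 1 / \<beta> i) * (B * J * transpose_mat C)"
      unfolding Q_def using B CT J by (simp add: assoc_mult_mat[OF Dmat_carrier B J] assoc_mult_mat[of _ n n _ n _ n])
    also have "\<dots> = Dmat n (\<lambda>i. 1 / \<beta> i * \<alpha> i)" unfolding BJC Dmat_mult ..
    also have "\<dots> = Dmat n (\<lambda>i. \<alpha> i / \<beta> i)" by simp
    finally show ?thesis .
  qed
  have "J = (transpose_mat C * Q) * J * (transpose_mat C * Q)"
    unfolding CQ using J by simp
  also have "\<dots> = transpose_mat C * (Q * J * transpose_mat C) * Q"
    using CT Q J by (simp add: assoc_mult_mat[of _ n n _ n _ n])
  finally have Jeq: "J = transpose_mat C * Dmat n (\<lambda>i. \<alpha> i / \<beta> i) * Q" unfolding QJC .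
  have "similar_mat_wit J (Dmat n (\<lambda>i. \<alpha> i / \<beta> i)) (transpose_mat C) Q"
    by (rule similar_mat_witI[OF CQ QC Jeq J Dmat_carrier CT Q])
  then show ?thesis unfolding similar_mat_def by blast
qed


lemma det1: "A \<in> carrier_mat 1 1 \<Longrightarrow> det A = A $$ (0,0)"
proof -
  assume A: "A \<in> carrier_mat 1 1"
  have "mat_delete A 0 0 \<in> carrier_mat 0 0" using A by (auto simp: mat_delete_def)
  then have "det (mat_delete A 0 0) = 1" by (rule det_dim_zero)
  then show ?thesis using laplace_expansion_row[of A 1 0] A by (simp add: cofactor_def)
qed
lemma det2: assumes "A \<in> carrier_mat 2 2"
  shows "det A = A $$ (0,0) * A $$ (1,1) - A $$ (0,1) * A $$ (1,0)"
proof -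
  have "det A = (\<Sum>j<2. A $$ (0,j) * cofactor A 0 j)" by (rule laplace_expansion_row[OF assms]) simp
  also have "\<dots> = A $$ (0,0) * cofactor A 0 0 + A $$ (0,1) * cofactor A 0 1"
    by (simp add: numeral_2_eq_2)
  also have "cofactor A 0 0 = A $$ (1,1)" unfolding cofactor_def
    using assms by (subst det1) (auto simp: mat_delete_def)
  also have "cofactor A 0 1 = - A $$ (1,0)" unfolding cofactor_def
    using assms by (subst det1) (auto simp: mat_delete_def)
  finally show ?thesis by simp
qed



lemma mult3_lin:
  fixes B C X Y :: "complex mat"
  assumes B: "B \<in> carrier_mat n n" and C: "C \<in> carrier_mat n n"
    and X: "X \<in> carrier_mat n n" and Y: "Y \<in> carrier_mat n n" and jk: "j < n" "k < n"
  shows "(B * (c \<cdot>\<^sub>m X + d \<cdot>\<^sub>m Y) * transpose_mat C) $$ (j,k)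
     = c * (B * X * transpose_mat C) $$ (j,k) + d * (B * Y * transpose_mat C) $$ (j,k)"
proof -
  have XY: "c \<cdot>\<^sub>m X + d \<cdot>\<^sub>m Y \<in> carrier_mat n n" using X Y by simp
  have "(B * (c \<cdot>\<^sub>m X + d \<cdot>\<^sub>m Y) * transpose_mat C) $$ (j,k)
     = (\<Sum>j'<n. \<Sum>k'<n. B $$ (j,j') * (c \<cdot>\<^sub>m X + d \<cdot>\<^sub>m Y) $$ (j',k') * C $$ (k,k'))"
    by (rule mult3_index[OF B XY C jk])
  also have "\<dots> = (\<Sum>j'<n. \<Sum>k'<n. c * (B $$ (j,j') * X $$ (j',k') * C $$ (k,k'))
        + d * (B $$ (j,j') * Y $$ (j',k') * C $$ (k,k')))"
    using X Y by (intro sum.cong refl) (simp add: distrib_left distrib_right mult.assoc mult.left_commute)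
  also have "\<dots> = c * (\<Sum>j'<n. \<Sum>k'<n. B $$ (j,j') * X $$ (j',k') * C $$ (k,k'))
        + d * (\<Sum>j'<n. \<Sum>k'<n. B $$ (j,j') * Y $$ (j',k') * C $$ (k,k'))"
    by (simp add: sum.distrib sum_distrib_left)
  also have "\<dots> = c * (B * X * transpose_mat C) $$ (j,k) + d * (B * Y * transpose_mat C) $$ (j,k)"
    using mult3_index[OF B X C jk] mult3_index[OF B Y C jk] by simp
  finally show ?thesis .
qed

lemma not_in_orbit:
  fixes bs :: "(nat \<times> complex) list"
  assumes n: "n = sum_list (map fst bs)"
    and nz: "0 \<notin> fst ` set bs"
    and big: "(e, y) \<in> set bs" "e > 1"
  shows "pencil_state n (Dmat n (\<lambda>i. dl bs ! i)) (1\<^sub>m n) \<notin> SLOCC_orbit n (pencil_state n (jordan_matrix bs) (1\<^sub>m n))"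
proof
  let ?J = "jordan_matrix bs"
  let ?\<delta> = "\<lambda>i. dl bs ! i"
  let ?D = "Dmat n ?\<delta>"
  have J: "?J \<in> carrier_mat n n" using n by simp
  have I: "1\<^sub>m n \<in> carrier_mat n n" by simp
  have Jd: "dim_row ?J = n" "dim_col ?J = n" using n by simp_all
  assume "pencil_state n ?D (1\<^sub>m n) \<in> SLOCC_orbit n (pencil_state n ?J (1\<^sub>m n))"
  then obtain A B C where G: "(A, B, C) \<in> SLOCC_group n"
    and eq: "pencil_state n ?D (1\<^sub>m n) = tensor_act n A B C (pencil_state n ?J (1\<^sub>m n))"
    unfolding SLOCC_orbit_def by auto
  have A: "A \<in> carrier_mat 2 2" and dA: "det A = 1" and B: "B \<in> carrier_mat n n" and dB: "det B = 1"
    and C: "C \<in> carrier_mat n n" and dC: "det C = 1"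
    using G unfolding SLOCC_group_def by auto
  have dA': "A $$ (0,0) * A $$ (1,1) - A $$ (0,1) * A $$ (1,0) = 1" using det2[OF A] dA by simp
  define M0 where "M0 = A $$ (0,0) \<cdot>\<^sub>m ?J + A $$ (0,1) \<cdot>\<^sub>m 1\<^sub>m n"
  define M1 where "M1 = A $$ (1,0) \<cdot>\<^sub>m ?J + A $$ (1,1) \<cdot>\<^sub>m 1\<^sub>m n"
  have M0: "M0 \<in> carrier_mat n n" and M1: "M1 \<in> carrier_mat n n" unfolding M0_def M1_def using J by auto
  have e0: "(B * M0 * transpose_mat C) $$ (j,k) = ?D $$ (j,k)" if "j < n" "k < n" for j k
  proof -
    have "(B * M0 * transpose_mat C) $$ (j,k) = tensor_act n A B C (pencil_state n ?J (1\<^sub>m n)) 0 j k"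
      unfolding M0_def using tensor_pencil_slice[OF J I B C _ that, of 0 A] by simp
    also have "\<dots> = ?D $$ (j,k)" unfolding eq[symmetric] using that by (simp add: pencil_state_def)
    finally show ?thesis .
  qed
  have e1: "(B * M1 * transpose_mat C) $$ (j,k) = (1\<^sub>m n) $$ (j,k)" if "j < n" "k < n" for j k
  proof -
    have "(B * M1 * transpose_mat C) $$ (j,k) = tensor_act n A B C (pencil_state n ?J (1\<^sub>m n)) 1 j k"
      unfolding M1_def using tensor_pencil_slice[OF J I B C _ that, of 1 A] by simp
    also have "\<dots> = (1\<^sub>m n) $$ (j,k)" unfolding eq[symmetric] using that by (simp add: pencil_state_def)
    finally show ?thesis .
  qed
  have Jc: "?J = A $$ (1,1) \<cdot>\<^sub>m M0 + (- A $$ (0,1)) \<cdot>\<^sub>m M1"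
  proof (rule eq_matI)
    fix i j assume "i < dim_row (A $$ (1,1) \<cdot>\<^sub>m M0 + (- A $$ (0,1)) \<cdot>\<^sub>m M1)"
      "j < dim_col (A $$ (1,1) \<cdot>\<^sub>m M0 + (- A $$ (0,1)) \<cdot>\<^sub>m M1)"
    then have ij: "i < n" "j < n" using M0 M1 by auto
    have "(A $$ (1,1) \<cdot>\<^sub>m M0 + (- A $$ (0,1)) \<cdot>\<^sub>m M1) $$ (i,j)
       = (A $$ (0,0) * A $$ (1,1) - A $$ (0,1) * A $$ (1,0)) * ?J $$ (i,j)"
      using ij J Jd unfolding M0_def M1_def by (simp add: algebra_simps)
    then show "?J $$ (i,j) = (A $$ (1,1) \<cdot>\<^sub>m M0 + (- A $$ (0,1)) \<cdot>\<^sub>m M1) $$ (i,j)"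
      using dA' by simp
  qed (use M0 M1 J in auto)
  have Ic: "1\<^sub>m n = (- A $$ (1,0)) \<cdot>\<^sub>m M0 + A $$ (0,0) \<cdot>\<^sub>m M1"
  proof (rule eq_matI)
    fix i j assume "i < dim_row ((- A $$ (1,0)) \<cdot>\<^sub>m M0 + A $$ (0,0) \<cdot>\<^sub>m M1)"
      "j < dim_col ((- A $$ (1,0)) \<cdot>\<^sub>m M0 + A $$ (0,0) \<cdot>\<^sub>m M1)"
    then have ij: "i < n" "j < n" using M0 M1 by auto
    have "((- A $$ (1,0)) \<cdot>\<^sub>m M0 + A $$ (0,0) \<cdot>\<^sub>m M1) $$ (i,j)
       = (A $$ (0,0) * A $$ (1,1) - A $$ (0,1) * A $$ (1,0)) * (1\<^sub>m n) $$ (i,j)"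
      using ij J Jd unfolding M0_def M1_def by (simp add: algebra_simps)
    then show "(1\<^sub>m n) $$ (i,j) = ((- A $$ (1,0)) \<cdot>\<^sub>m M0 + A $$ (0,0) \<cdot>\<^sub>m M1) $$ (i,j)"
      using dA' by simp
  qed (use M0 M1 in auto)
  have BJC: "B * ?J * transpose_mat C = Dmat n (\<lambda>i. A $$ (1,1) * ?\<delta> i - A $$ (0,1))"
  proof (rule eq_matI)
    fix j k assume "j < dim_row (Dmat n (\<lambda>i. A $$ (1,1) * ?\<delta> i - A $$ (0,1)))"
      "k < dim_col (Dmat n (\<lambda>i. A $$ (1,1) * ?\<delta> i - A $$ (0,1)))"
    then have jk: "j < n" "k < n" by auto
    have "(B * ?J * transpose_mat C) $$ (j,k) = A $$ (1,1) * (B * M0 * transpose_mat C) $$ (j,k)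
        + (- A $$ (0,1)) * (B * M1 * transpose_mat C) $$ (j,k)"
      by (subst Jc, rule mult3_lin[OF B C M0 M1 jk])
    also have "\<dots> = Dmat n (\<lambda>i. A $$ (1,1) * ?\<delta> i - A $$ (0,1)) $$ (j,k)"
      using e0[OF jk] e1[OF jk] jk by simp
    finally show "(B * ?J * transpose_mat C) $$ (j,k) = Dmat n (\<lambda>i. A $$ (1,1) * ?\<delta> i - A $$ (0,1)) $$ (j,k)" .
  qed (use B C J in auto)
  have BC: "B * transpose_mat C = Dmat n (\<lambda>i. A $$ (0,0) - A $$ (1,0) * ?\<delta> i)"
  proof (rule eq_matI)
    fix j k assume "j < dim_row (Dmat n (\<lambda>i. A $$ (0,0) - A $$ (1,0) * ?\<delta> i))"
      "k < dim_col (Dmat n (\<lambda>i. A $$ (0,0) - A $$ (1,0) * ?\<delta> i))"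
    then have jk: "j < n" "k < n" by auto
    have "B * transpose_mat C = B * 1\<^sub>m n * transpose_mat C" using B by simp
    then have "(B * transpose_mat C) $$ (j,k) = (- A $$ (1,0)) * (B * M0 * transpose_mat C) $$ (j,k)
        + A $$ (0,0) * (B * M1 * transpose_mat C) $$ (j,k)"
      by (metis Ic mult3_lin[OF B C M0 M1 jk])
    also have "\<dots> = Dmat n (\<lambda>i. A $$ (0,0) - A $$ (1,0) * ?\<delta> i) $$ (j,k)"
      using e0[OF jk] e1[OF jk] jk by (simp add: algebra_simps)
    finally show "(B * transpose_mat C) $$ (j,k) = Dmat n (\<lambda>i. A $$ (0,0) - A $$ (1,0) * ?\<delta> i) $$ (j,k)" .
  qed (use B C in auto)
  define \<gamma> where "\<gamma> = (\<lambda>i. (A $$ (1,1) * ?\<delta> i - A $$ (0,1)) / (A $$ (0,0) - A $$ (1,0) * ?\<delta> i))"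
  have sim: "similar_mat ?J (Dmat n \<gamma>)"
    unfolding \<gamma>_def by (rule diag_similar[OF J B C BJC BC dB dC])
  define gs where "gs = map \<gamma> [0..<n]"
  have lgs: "length gs = n" unfolding gs_def by simp
  have slg: "sum_list (map fst (map (\<lambda>g. (1::nat, g)) gs)) = n"
    unfolding gs_def by (induct n) auto
  have DJ: "Dmat n \<gamma> = jordan_matrix (map (\<lambda>g. (1::nat, g)) gs)"
  proof (rule eq_matI)
    fix i j assume "i < dim_row (jordan_matrix (map (\<lambda>g. (1::nat, g)) gs))"
      "j < dim_col (jordan_matrix (map (\<lambda>g. (1::nat, g)) gs))"
    then have ij: "i < n" "j < n" using slg by auto
    show "Dmat n \<gamma> $$ (i,j) = jordan_matrix (map (\<lambda>g. (1::nat, g)) gs) $$ (i,j)"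
      using jm_ones[of i gs j] ij lgs by (simp add: gs_def)
  qed (use slg in auto)
  have jnf1: "jordan_nf ?J bs" unfolding jordan_nf_def using nz similar_mat_refl[OF J] by simp
  have jnf2: "jordan_nf ?J (map (\<lambda>g. (1::nat, g)) gs)" unfolding jordan_nf_def using sim DJ by auto
  have "set bs = set (map (\<lambda>g. (1::nat, g)) gs)" by (rule jordan_nf_unique[OF jnf1 jnf2])
  then show False using big by auto
qed



lemma mult_Dmat_index:
  fixes B :: "complex mat"
  assumes B: "B \<in> carrier_mat n n" and jk: "j < n" "k < n"
  shows "(B * Dmat n f) $$ (j,k) = B $$ (j,k) * f k"
proof -
  have "(B * Dmat n f) $$ (j,k) = (\<Sum>i<n. B $$ (j,i) * Dmat n f $$ (i,k))"
    using B jk by (simp add: scalar_prod_def atLeast0LessThan)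
  also have "\<dots> = (\<Sum>i<n. if i = k then B $$ (j,k) * f k else 0)"
    using jk by (intro sum.cong refl) auto
  also have "\<dots> = B $$ (j,k) * f k" using jk by simp
  finally show ?thesis .
qed

lemma scale_orbit:
  assumes G: "(A, B, C) \<in> SLOCC_group n"
    and u: "(\<Prod>j<n. u j) = (1::complex)" and v: "(\<Prod>j<n. v j) = (1::complex)"
  shows "tensor_act n A B C (\<lambda>a j k. u j * v k * T a j k) \<in> SLOCC_orbit n T"
proof -
  have B: "B \<in> carrier_mat n n" and C: "C \<in> carrier_mat n n" and A: "A \<in> carrier_mat 2 2"
    and dA: "det A = 1" and dB: "det B = 1" and dC: "det C = 1" using G unfolding SLOCC_group_def by auto
  have "(A, B * Dmat n u, C * Dmat n v) \<in> SLOCC_group n"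
    unfolding SLOCC_group_def using A B C dA dB dC u v
    by (simp add: det_mult[OF B Dmat_carrier] det_mult[OF C Dmat_carrier] det_Dmat)
  moreover have "tensor_act n A (B * Dmat n u) (C * Dmat n v) T = tensor_act n A B C (\<lambda>a j k. u j * v k * T a j k)"
    by (rule tensor_scale) (simp_all add: mult_Dmat_index[OF B] mult_Dmat_index[OF C])
  ultimately show ?thesis unfolding SLOCC_orbit_def by force
qed

lemma norm_sum3:
  fixes f :: "'a \<Rightarrow> 'b \<Rightarrow> 'c \<Rightarrow> complex"
  shows "norm (\<Sum>a\<in>X. \<Sum>b\<in>Y. \<Sum>c\<in>Z. f a b c) \<le> (\<Sum>a\<in>X. \<Sum>b\<in>Y. \<Sum>c\<in>Z. norm (f a b c))"
  by (rule order_trans[OF norm_sum sum_mono], rule order_trans[OF norm_sum sum_mono], rule norm_sum)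

definition Kf :: "nat \<Rightarrow> complex mat \<Rightarrow> complex mat \<Rightarrow> complex mat \<Rightarrow> nat \<Rightarrow> nat \<Rightarrow> nat \<Rightarrow> real" where
  "Kf n A B C a j k = (\<Sum>a'<2. \<Sum>j'<n. \<Sum>k'<n. cmod (A $$ (a,a') * B $$ (j,j') * C $$ (k,k')))"

definition KK :: "nat \<Rightarrow> complex mat \<Rightarrow> complex mat \<Rightarrow> complex mat \<Rightarrow> real" where
  "KK n A B C = (\<Sum>a<2. \<Sum>j<n. \<Sum>k<n. Kf n A B C a j k)"

lemma Kf_le_KK: "a < 2 \<Longrightarrow> j < n \<Longrightarrow> k < n \<Longrightarrow> Kf n A B C a j k \<le> KK n A B C"
proof -
  assume h: "a < 2" "j < n" "k < n"
  have nn: "\<And>a j k. 0 \<le> Kf n A B C a j k" unfolding Kf_def by (intro sum_nonneg) auto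
  have "Kf n A B C a j k \<le> (\<Sum>k<n. Kf n A B C a j k)"
    by (rule member_le_sum) (use h nn in auto)
  also have "\<dots> \<le> (\<Sum>j<n. \<Sum>k<n. Kf n A B C a j k)"
    by (rule member_le_sum[where f = "\<lambda>j. \<Sum>k<n. Kf n A B C a j k"]) (use h nn in \<open>auto intro!: sum_nonneg\<close>)
  also have "\<dots> \<le> KK n A B C" unfolding KK_def
    by (rule member_le_sum[where f = "\<lambda>a. \<Sum>j<n. \<Sum>k<n. Kf n A B C a j k"]) (use h nn in \<open>auto intro!: sum_nonneg\<close>)
  finally show ?thesis .
qed

lemma KK_nonneg: "0 \<le> KK n A B C"
  unfolding KK_def Kf_def by (intro sum_nonneg) auto

lemma tensor_diff_bound:
  assumes d: "\<And>a j k. a < 2 \<Longrightarrow> j < n \<Longrightarrow> k < n \<Longrightarrow> cmod (T a j k - T' a j k) \<le> s"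
    and h: "a < 2" "j < n" "k < n"
  shows "cmod (tensor_act n A B C T a j k - tensor_act n A B C T' a j k) \<le> KK n A B C * s"
proof -
  have "cmod (tensor_act n A B C T a j k - tensor_act n A B C T' a j k)
      = cmod (\<Sum>a'<2. \<Sum>j'<n. \<Sum>k'<n. (A $$ (a,a') * B $$ (j,j') * C $$ (k,k')) * (T a' j' k' - T' a' j' k'))"
  proof -
    have "tensor_act n A B C T a j k - tensor_act n A B C T' a j k
       = (\<Sum>a'<2. \<Sum>j'<n. \<Sum>k'<n. A $$ (a,a') * B $$ (j,j') * C $$ (k,k') * T a' j' k')
       - (\<Sum>a'<2. \<Sum>j'<n. \<Sum>k'<n. A $$ (a,a') * B $$ (j,j') * C $$ (k,k') * T' a' j' k')"
      using h unfolding tensor_act_def by simp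
    also have "\<dots> = (\<Sum>a'<2. \<Sum>j'<n. \<Sum>k'<n. A $$ (a,a') * B $$ (j,j') * C $$ (k,k') * T a' j' k'
        - A $$ (a,a') * B $$ (j,j') * C $$ (k,k') * T' a' j' k')"
      by (simp only: sum_subtractf[symmetric])
    also have "\<dots> = (\<Sum>a'<2. \<Sum>j'<n. \<Sum>k'<n. (A $$ (a,a') * B $$ (j,j') * C $$ (k,k')) * (T a' j' k' - T' a' j' k'))"
      by (simp only: right_diff_distrib)
    finally show ?thesis by simp
  qed
  also have "\<dots> \<le> (\<Sum>a'<2. \<Sum>j'<n. \<Sum>k'<n. cmod ((A $$ (a,a') * B $$ (j,j') * C $$ (k,k')) * (T a' j' k' - T' a' j' k')))"
    by (rule norm_sum3)
  also have "\<dots> \<le> (\<Sum>a'<2. \<Sum>j'<n. \<Sum>k'<n. cmod (A $$ (a,a') * B $$ (j,j') * C $$ (k,k')) * s)"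
    unfolding norm_mult by (intro sum_mono mult_left_mono d) auto
  also have "\<dots> = Kf n A B C a j k * s" unfolding Kf_def by (simp add: sum_distrib_right)
  also have "\<dots> \<le> KK n A B C * s"
  proof (rule mult_right_mono[OF Kf_le_KK[OF h]])
    have "cmod (T a j k - T' a j k) \<le> s" by (rule d[OF h])
    then show "0 \<le> s" using norm_ge_zero order_trans by blast
  qed
  finally show ?thesis .
qed




lemma tensor_id:
  assumes "a < 2" "j < n" "k < n"
  shows "tensor_act n (1\<^sub>m 2) (1\<^sub>m n) (1\<^sub>m n) T a j k = T a j k"
proof -
  have "tensor_act n (1\<^sub>m 2) (1\<^sub>m n) (1\<^sub>m n) T a j k = (\<Sum>a'<2. (1\<^sub>m 2) $$ (a,a') * T a' j k)"
    by (rule tensor_A_only[OF assms])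
  also have "\<dots> = (\<Sum>a'<2. if a' = a then T a' j k else 0)"
    using assms(1) by (intro sum.cong refl) auto
  also have "\<dots> = T a j k" using assms(1) by simp
  finally show ?thesis .
qed

lemma id_in_G: "(1\<^sub>m 2, 1\<^sub>m n, 1\<^sub>m n) \<in> SLOCC_group n"
  unfolding SLOCC_group_def by simp

lemma pos_normalize:
  fixes n :: nat
  assumes n: "n > 0" and w: "\<And>j. w j > (0::real)"
  shows "\<exists>\<kappa>>0. (\<Prod>j<n. complex_of_real (\<kappa> * w j)) = 1 \<and> (\<Prod>j<n. complex_of_real (1 / (\<kappa> * w j))) = 1"
proof -
  define P where "P = (\<Prod>j<n. w j)"
  have P: "P > 0" unfolding P_def using w by (simp add: prod_pos)
  define \<kappa> where "\<kappa> = root n (1 / P)"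
  have k: "\<kappa> > 0" unfolding \<kappa>_def using P n by simp
  have kn: "\<kappa> ^ n = 1 / P" unfolding \<kappa>_def using P n by (simp add: real_root_pow_pos2)
  have p1: "(\<Prod>j<n. \<kappa> * w j) = 1"
  proof -
    have "(\<Prod>j<n. \<kappa> * w j) = \<kappa> ^ n * P" unfolding P_def by (simp add: prod.distrib)
    then show ?thesis using kn P by (simp del: prod_zero_iff)
  qed
  have p2: "(\<Prod>j<n. 1 / (\<kappa> * w j)) = 1"
  proof -
    have wnz: "\<And>j. w j \<noteq> 0" using w by (metis less_irrefl)
    show ?thesis using p1 wnz by (simp add: prod_dividef)
  qed
  have "(\<Prod>j<n. complex_of_real (\<kappa> * w j)) = complex_of_real (\<Prod>j<n. \<kappa> * w j)"
    by (rule of_real_prod[symmetric])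
  also have "\<dots> = 1" unfolding p1 by (rule of_real_1)
  finally have q1: "(\<Prod>j<n. complex_of_real (\<kappa> * w j)) = 1" .
  have "(\<Prod>j<n. complex_of_real (1 / (\<kappa> * w j))) = complex_of_real (\<Prod>j<n. 1 / (\<kappa> * w j))"
    by (rule of_real_prod[symmetric])
  also have "\<dots> = 1" unfolding p2 by (rule of_real_1)
  finally have q2: "(\<Prod>j<n. complex_of_real (1 / (\<kappa> * w j))) = 1" .
  show ?thesis by (intro exI[of _ \<kappa>] conjI k q1 q2)
qed

lemma scaled_in_orbit:
  assumes n: "n > 0" and G: "(A, B, C) \<in> SLOCC_group n" and s: "s > 0"
  shows "tensor_act n A B C (\<lambda>a j k. complex_of_real ((1/s)^j / (1/s)^k) * T a j k) \<in> SLOCC_orbit n T"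
proof -
  have w: "\<And>j. (1/s)^j > 0" using s by simp
  have "\<exists>\<kappa>>0. (\<Prod>j<n. complex_of_real (\<kappa> * (1/s)^j)) = 1 \<and> (\<Prod>j<n. complex_of_real (1 / (\<kappa> * (1/s)^j))) = 1"
    by (rule pos_normalize[of n "\<lambda>j. (1/s)^j", OF n w])
  then obtain \<kappa> where kk: "\<kappa> > 0 \<and> (\<Prod>j<n. complex_of_real (\<kappa> * (1/s)^j)) = 1 \<and> (\<Prod>j<n. complex_of_real (1 / (\<kappa> * (1/s)^j))) = 1"
    by (rule exE)
  have k: "\<kappa> > 0" using kk by (rule conjunct1)
  have p1: "(\<Prod>j<n. complex_of_real (\<kappa> * (1/s)^j)) = 1" using kk by (rule conjunct1[OF conjunct2])
  have p2: "(\<Prod>j<n. complex_of_real (1 / (\<kappa> * (1/s)^j))) = 1" using kk by (rule conjunct2[OF conjunct2])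
  have "tensor_act n A B C (\<lambda>a j k. complex_of_real (\<kappa> * (1/s)^j) * complex_of_real (1 / (\<kappa> * (1/s)^k)) * T a j k)
     \<in> SLOCC_orbit n T"
    by (rule scale_orbit[of A B C n "\<lambda>j. complex_of_real (\<kappa> * (1/s)^j)" "\<lambda>k. complex_of_real (1 / (\<kappa> * (1/s)^k))" T, OF G p1 p2])
  moreover have "\<And>j k. complex_of_real (\<kappa> * (1/s)^j) * complex_of_real (1 / (\<kappa> * (1/s)^k))
      = complex_of_real ((1/s)^j / (1/s)^k)"
  proof -
    fix j k
    have gen: "\<And>x y::real. \<kappa> * x * (1 / (\<kappa> * y)) = x / y" using k by simp
    show "complex_of_real (\<kappa> * (1/s)^j) * complex_of_real (1 / (\<kappa> * (1/s)^k))
      = complex_of_real ((1/s)^j / (1/s)^k)"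
      unfolding of_real_mult[symmetric] gen ..
  qed
  ultimately show ?thesis by simp
qed



lemma scaled_close:
  fixes bs :: "(nat \<times> complex) list"
  assumes n: "n = sum_list (map fst bs)" and s: "s > 0"
    and h: "a < 2" "j < n" "k < n"
  shows "cmod (complex_of_real ((1/s)^j / (1/s)^k) * pencil_state n (jordan_matrix bs) (1\<^sub>m n) a j k
      - pencil_state n (Dmat n (\<lambda>i. dl bs ! i)) (1\<^sub>m n) a j k) \<le> s"
proof -
  have E: "jordan_matrix bs $$ (j,j) = dl bs ! j
     \<and> (k \<noteq> j \<longrightarrow> k \<noteq> Suc j \<longrightarrow> jordan_matrix bs $$ (j,k) = 0)
     \<and> (k = Suc j \<longrightarrow> jordan_matrix bs $$ (j,k) = 0 \<or> jordan_matrix bs $$ (j,k) = 1)"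
    using jm_entries[of j bs k] h n by simp
  have s0: "0 \<le> s" using s by simp
  show ?thesis
  proof (cases "a = 0")
    case a0: True
    show ?thesis
    proof (cases "k = j")
      case True
      have "(1/s)^j / (1/s)^k = 1" using True s by simp
      then show ?thesis using True a0 h E s0 by (simp add: pencil_state_def)
    next
      case False
      show ?thesis
      proof (cases "k = Suc j")
        case True
        have f: "(1/s)^j / (1/s)^k = s" using True s by (simp add: field_simps)
        from E True have "jordan_matrix bs $$ (j,k) = 0 \<or> jordan_matrix bs $$ (j,k) = 1" by simp
        then show ?thesis using a0 h False s0 f by (auto simp: pencil_state_def)
      next
        case False2: False
        then show ?thesis using a0 h E False s0 by (simp add: pencil_state_def)
      qed
    qed
  next
    case False
    then have a1: "a = 1" using h by simp
    show ?thesis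
    proof (cases "k = j")
      case True
      have "(1/s)^j / (1/s)^k = 1" using True s by simp
      then show ?thesis using True a1 h s0 by (simp add: pencil_state_def)
    next
      case False then show ?thesis using a1 h s0 by (simp add: pencil_state_def)
    qed
  qed
qed


lemma psi'_in_closure:
  fixes bs :: "(nat \<times> complex) list"
  assumes n: "n = sum_list (map fst bs)" "n > 0"
  shows "pencil_state n (Dmat n (\<lambda>i. dl bs ! i)) (1\<^sub>m n) \<in> closure (SLOCC_orbit n (pencil_state n (jordan_matrix bs) (1\<^sub>m n)))"
proof (rule closure_coordI)
  let ?\<psi> = "pencil_state n (jordan_matrix bs) (1\<^sub>m n)"
  let ?\<psi>' = "pencil_state n (Dmat n (\<lambda>i. dl bs ! i)) (1\<^sub>m n)"
  fix \<eta> :: real assume eta: "\<eta> > 0"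
  define s where "s = \<eta> / 2"
  have s: "s > 0" "s < \<eta>" unfolding s_def using eta by auto
  let ?T = "tensor_act n (1\<^sub>m 2) (1\<^sub>m n) (1\<^sub>m n) (\<lambda>a j k. complex_of_real ((1/s)^j / (1/s)^k) * ?\<psi> a j k)"
  have "?T \<in> SLOCC_orbit n ?\<psi>" by (rule scaled_in_orbit[OF n(2) id_in_G s(1)])
  moreover have "\<forall>a<2. \<forall>j<n. \<forall>k<n. cmod (?T a j k - ?\<psi>' a j k) < \<eta>"
  proof (intro allI impI)
    fix a j k assume h: "a < (2::nat)" "j < n" "k < n"
    have "cmod (?T a j k - ?\<psi>' a j k) \<le> s"
      unfolding tensor_id[OF h] by (rule scaled_close[OF n(1) s(1) h])
    then show "cmod (?T a j k - ?\<psi>' a j k) < \<eta>" using s by simp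
  qed
  ultimately show "\<exists>T\<in>SLOCC_orbit n ?\<psi>. \<forall>a<2. \<forall>j<n. \<forall>k<n. cmod (T a j k - ?\<psi>' a j k) < \<eta>" by blast
next
  fix T assume "T \<in> SLOCC_orbit n (pencil_state n (jordan_matrix bs) (1\<^sub>m n))"
  then show "vanish n T" unfolding SLOCC_orbit_def by (auto simp: vanish_tensor)
next
  show "vanish n (pencil_state n (Dmat n (\<lambda>i. dl bs ! i)) (1\<^sub>m n))" by (rule vanish_pencil)
qed

lemma nullcone_transfer:
  fixes bs :: "(nat \<times> complex) list"
  assumes n: "n = sum_list (map fst bs)" "n > 0"
    and nc: "in_null_cone n (pencil_state n (Dmat n (\<lambda>i. dl bs ! i)) (1\<^sub>m n))"
  shows "in_null_cone n (pencil_state n (jordan_matrix bs) (1\<^sub>m n))"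
  unfolding in_null_cone_def
proof (rule closure_coordI)
  let ?\<psi> = "pencil_state n (jordan_matrix bs) (1\<^sub>m n)"
  let ?\<psi>' = "pencil_state n (Dmat n (\<lambda>i. dl bs ! i)) (1\<^sub>m n)"
  fix \<eta> :: real assume eta: "\<eta> > 0"
  have "(\<lambda>_ _ _. 0) \<in> closure (SLOCC_orbit n ?\<psi>')" using nc unfolding in_null_cone_def .
  from closure_coordD[OF this, of "\<eta>/2" n] eta obtain T0 where T0: "T0 \<in> SLOCC_orbit n ?\<psi>'"
    and small: "\<forall>a<2. \<forall>j<n. \<forall>k<n. cmod (T0 a j k - 0) < \<eta>/2" by auto
  from T0 obtain A B C where G: "(A, B, C) \<in> SLOCC_group n" and T0e: "T0 = tensor_act n A B C ?\<psi>'"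
    unfolding SLOCC_orbit_def by auto
  define s where "s = \<eta> / (2 * (KK n A B C + 1))"
  have K0: "0 \<le> KK n A B C" by (rule KK_nonneg)
  have s: "s > 0" unfolding s_def using eta K0 by simp
  have Ks: "KK n A B C * s < \<eta> / 2"
  proof -
    have "KK n A B C * s = \<eta> / 2 * (KK n A B C / (KK n A B C + 1))" unfolding s_def using K0 by (simp add: field_simps)
    also have "\<dots> < \<eta> / 2 * 1" using K0 eta by (intro mult_strict_left_mono) auto
    finally show ?thesis by simp
  qed
  let ?T = "tensor_act n A B C (\<lambda>a j k. complex_of_real ((1/s)^j / (1/s)^k) * ?\<psi> a j k)"
  have "?T \<in> SLOCC_orbit n ?\<psi>" by (rule scaled_in_orbit[OF n(2) G s])
  moreover have "\<forall>a<2. \<forall>j<n. \<forall>k<n. cmod (?T a j k - (\<lambda>_ _ _. 0) a j k) < \<eta>"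
  proof (intro allI impI)
    fix a j k assume h: "a < (2::nat)" "j < n" "k < n"
    have d: "cmod (?T a j k - T0 a j k) \<le> KK n A B C * s"
      unfolding T0e by (rule tensor_diff_bound[OF scaled_close[OF n(1) s] h])
    have "cmod (?T a j k) \<le> cmod (?T a j k - T0 a j k) + cmod (T0 a j k)"
      using norm_triangle_sub[of "?T a j k" "T0 a j k"] by (simp add: add.commute)
    also have "\<dots> < \<eta>"
    proof -
      have "cmod (T0 a j k) < \<eta>/2" using small h by simp
      then show ?thesis using d Ks by linarith
    qed
    finally show "cmod (?T a j k - (\<lambda>_ _ _. 0) a j k) < \<eta>" by simp
  qed
  ultimately show "\<exists>T\<in>SLOCC_orbit n ?\<psi>. \<forall>a<2. \<forall>j<n. \<forall>k<n. cmod (T a j k - (\<lambda>_ _ _. 0) a j k) < \<eta>" by blast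
next
  fix T assume "T \<in> SLOCC_orbit n (pencil_state n (jordan_matrix bs) (1\<^sub>m n))"
  then show "vanish n T" unfolding SLOCC_orbit_def by (auto simp: vanish_tensor)
next
  show "vanish n (\<lambda>_ _ _. 0)" unfolding vanish_def by simp
qed





lemma det_bound:
  fixes M :: "complex mat"
  assumes M: "M \<in> carrier_mat n n" and b: "\<And>i j. i < n \<Longrightarrow> j < n \<Longrightarrow> cmod (M $$ (i,j)) \<le> c"
  shows "cmod (det M) \<le> fact n * c ^ n"
proof -
  have c0: "0 \<le> c" if "n > 0" using b[of 0 0] that norm_ge_zero order_trans by blast
  have "cmod (det M) = cmod (\<Sum>p\<in>{p. p permutes {0..<n}}. signof p * (\<Prod>i = 0..<n. M $$ (i, p i)))"
    using det_def'[OF M] by simp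
  also have "\<dots> \<le> (\<Sum>p\<in>{p. p permutes {0..<n}}. cmod (signof p * (\<Prod>i = 0..<n. M $$ (i, p i))))"
    by (rule norm_sum)
  also have "\<dots> \<le> (\<Sum>p\<in>{p. p permutes {0..<n}}. c ^ n)"
  proof (rule sum_mono)
    fix p assume "p \<in> {p. p permutes {0..<n}}"
    then have p: "p permutes {0..<n}" by simp
    have s: "cmod (signof p :: complex) = 1" by (cases rule: sign_cases[of p]) auto
    have s': "\<bar>real_of_int (sign p)\<bar> = 1" by (cases rule: sign_cases[of p]) auto
    have "cmod (\<Prod>i = 0..<n. M $$ (i, p i)) = (\<Prod>i = 0..<n. cmod (M $$ (i, p i)))"
      by (rule prod_norm[symmetric])
    also have "\<dots> \<le> (\<Prod>i = 0..<n. c)"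
    proof (rule prod_mono)
      fix i assume "i \<in> {0..<n}"
      then have "i < n" "p i < n" using p permutes_in_image by fastforce+
      then show "0 \<le> cmod (M $$ (i, p i)) \<and> cmod (M $$ (i, p i)) \<le> c" using b by simp
    qed
    finally show "cmod (signof p * (\<Prod>i = 0..<n. M $$ (i, p i))) \<le> c ^ n"
      by (simp add: norm_mult s s')
  qed
  also have "\<dots> = fact n * c ^ n"
    using card_permutations[of "{0..<n}" n] by simp
  finally show ?thesis .
qed



lemma prod_list_upt: "prod_list (map f [0..<n]) = (\<Prod>i<n. f i)"
  by (induct n) simp_all

lemma det_pencil:
  fixes bs :: "(nat \<times> complex) list" and mu la :: complex
  assumes n: "n = sum_list (map fst bs)" and G: "(A, B, C) \<in> SLOCC_group n"
  shows "det (mat n n (\<lambda>(j,k). mu * tensor_act n A B C (pencil_state n (jordan_matrix bs) (1\<^sub>m n)) 0 j k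
                                + la * tensor_act n A B C (pencil_state n (jordan_matrix bs) (1\<^sub>m n)) 1 j k))
     = (\<Prod>j<n. mu * (A $$ (0,0) * dl bs ! j + A $$ (0,1)) + la * (A $$ (1,0) * dl bs ! j + A $$ (1,1)))"
proof -
  let ?J = "jordan_matrix bs"
  let ?T = "tensor_act n A B C (pencil_state n ?J (1\<^sub>m n))"
  have J: "?J \<in> carrier_mat n n" using n by simp
  have Jd: "dim_row ?J = n" "dim_col ?J = n" using n by simp_all
  have I: "1\<^sub>m n \<in> carrier_mat n n" by simp
  have B: "B \<in> carrier_mat n n" and dB: "det B = 1"
    and C: "C \<in> carrier_mat n n" and dC: "det C = 1"
    using G unfolding SLOCC_group_def by auto
  define M0 where "M0 = A $$ (0,0) \<cdot>\<^sub>m ?J + A $$ (0,1) \<cdot>\<^sub>m 1\<^sub>m n"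
  define M1 where "M1 = A $$ (1,0) \<cdot>\<^sub>m ?J + A $$ (1,1) \<cdot>\<^sub>m 1\<^sub>m n"
  have M0: "M0 \<in> carrier_mat n n" and M1: "M1 \<in> carrier_mat n n" unfolding M0_def M1_def using J by auto
  define M where "M = mu \<cdot>\<^sub>m M0 + la \<cdot>\<^sub>m M1"
  have M: "M \<in> carrier_mat n n" unfolding M_def using M0 M1 by auto
  have CT: "transpose_mat C \<in> carrier_mat n n" using C by simp
  have eq: "mat n n (\<lambda>(j,k). mu * ?T 0 j k + la * ?T 1 j k) = B * M * transpose_mat C"
  proof (rule eq_matI)
    fix j k assume "j < dim_row (B * M * transpose_mat C)" "k < dim_col (B * M * transpose_mat C)"
    then have jk: "j < n" "k < n" using B C by auto
    have t0: "?T 0 j k = (B * M0 * transpose_mat C) $$ (j,k)"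
      unfolding M0_def using tensor_pencil_slice[OF J I B C _ jk, of 0 A] by simp
    have t1: "?T 1 j k = (B * M1 * transpose_mat C) $$ (j,k)"
      unfolding M1_def using tensor_pencil_slice[OF J I B C _ jk, of 1 A] by simp
    show "mat n n (\<lambda>(j,k). mu * ?T 0 j k + la * ?T 1 j k) $$ (j,k) = (B * M * transpose_mat C) $$ (j,k)"
      unfolding M_def mult3_lin[OF B C M0 M1 jk] using jk t0 t1 by simp
  qed (use B C in auto)
  have "det (B * M * transpose_mat C) = det B * det M * det (transpose_mat C)"
    using det_mult[OF mult_carrier_mat[OF B M] CT] det_mult[OF B M] by simp
  also have "\<dots> = det M" using dB dC det_transpose[OF C] by simp
  also have "det M = prod_list (diag_mat M)"
  proof (rule det_upper_triangular[OF _ M])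
    show "upper_triangular M" unfolding upper_triangular_def
    proof (intro allI impI)
      fix i j assume "i < dim_row M" "j < i"
      then have ij: "i < n" "j < n" "j \<noteq> i" using M by auto
      have "?J $$ (i,j) = 0" using jordan_matrix_upper_triangular[of i bs j] ij n \<open>j < i\<close> by simp
      then show "M $$ (i,j) = 0" using ij Jd unfolding M_def M0_def M1_def by simp
    qed
  qed
  also have "\<dots> = (\<Prod>j<n. M $$ (j,j))" unfolding diag_mat_def using M by (simp add: prod_list_upt)
  also have "\<dots> = (\<Prod>j<n. mu * (A $$ (0,0) * dl bs ! j + A $$ (0,1)) + la * (A $$ (1,0) * dl bs ! j + A $$ (1,1)))"
  proof (rule prod.cong[OF refl])
    fix j assume "j \<in> {..<n}"
    then have j: "j < n" by simp
    have "?J $$ (j,j) = dl bs ! j" using jm_entries[of j bs j] j n by simp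
    then show "M $$ (j,j) = mu * (A $$ (0,0) * dl bs ! j + A $$ (0,1)) + la * (A $$ (1,0) * dl bs ! j + A $$ (1,1))"
      using j Jd unfolding M_def M0_def M1_def by simp
  qed
  finally show ?thesis unfolding eq .
qed



lemma one_form:
  fixes v0 v1 :: complex and t t' :: real and N :: nat
  assumes N: "N \<ge> 1" and t: "0 \<le> t" "t \<le> 1" and t': "0 \<le> t'" "t' \<le> 1"
    and d: "\<bar>t - t'\<bar> \<ge> 1 / real N"
  shows "\<not> (cmod (v0 + of_real t * v1) < max (cmod v0) (cmod v1) / (4 * real N)
          \<and> cmod (v0 + of_real t' * v1) < max (cmod v0) (cmod v1) / (4 * real N))"
proof
  let ?M = "max (cmod v0) (cmod v1)"
  let ?e = "?M / (4 * real N)"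
  assume h: "cmod (v0 + of_real t * v1) < ?e \<and> cmod (v0 + of_real t' * v1) < ?e"
  have Npos: "real N > 0" using N by simp
  have M0: "?M \<ge> 0" by (rule order_trans[OF norm_ge_zero max.cobounded1])
  have "of_real (t - t') * v1 = (v0 + of_real t * v1) - (v0 + of_real t' * v1)"
    by (simp add: algebra_simps)
  then have "\<bar>t - t'\<bar> * cmod v1 = cmod ((v0 + of_real t * v1) - (v0 + of_real t' * v1))"
    by (metis norm_mult norm_of_real)
  also have "\<dots> \<le> cmod (v0 + of_real t * v1) + cmod (v0 + of_real t' * v1)"
    by (rule norm_triangle_ineq4)
  also have "\<dots> < 2 * ?e" using h by simp
  finally have a: "\<bar>t - t'\<bar> * cmod v1 < 2 * ?e" .
  have "cmod v1 / real N \<le> \<bar>t - t'\<bar> * cmod v1"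
    using mult_right_mono[OF d norm_ge_zero[of v1]] by simp
  with a have "cmod v1 / real N < 2 * ?e" by simp
  then have v1: "cmod v1 < ?M / 2" using Npos by (simp add: field_simps)
  have "cmod v0 \<le> cmod (v0 + of_real t * v1) + cmod (of_real t * v1)"
    using norm_triangle_ineq4[of "v0 + of_real t * v1" "of_real t * v1"] by simp
  also have "cmod (of_real t * v1) \<le> cmod v1"
    using t by (simp add: norm_mult mult_left_le_one_le)
  finally have "cmod v0 < ?e + cmod v1" using h by simp
  moreover have "?e \<le> ?M / 4" by (rule divide_left_mono[OF _ M0]) (use N in auto)
  ultimately have v0: "cmod v0 < ?M / 4 + ?M / 2" using v1 by simp
  show False
  proof (cases "cmod v0 \<le> cmod v1")
    case True then show ?thesis using v1 by (simp add: max_def)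
  next
    case False then show ?thesis using v0 by (simp add: max_def)
  qed
qed

lemma pigeon:
  fixes v0 v1 :: "nat \<Rightarrow> complex" and N :: nat
  assumes N: "N \<ge> 1"
  shows "\<exists>i\<le>N. \<forall>j<N. cmod (v0 j + of_real (real i / real N) * v1 j) \<ge> max (cmod (v0 j)) (cmod (v1 j)) / (4 * real N)"
proof -
  define bad where "bad j = {i \<in> {0..N}. cmod (v0 j + of_real (real i / real N) * v1 j) < max (cmod (v0 j)) (cmod (v1 j)) / (4 * real N)}" for j
  have fin: "finite (bad j)" for j unfolding bad_def by simp
  have c1: "card (bad j) \<le> 1" for j
  proof -
    have "\<forall>a1\<in>bad j. \<forall>a2\<in>bad j. a1 = a2"
    proof (intro ballI, rule ccontr)
      fix a1 a2 assume a: "a1 \<in> bad j" "a2 \<in> bad j" "a1 \<noteq> a2"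
      have Npos: "real N > 0" using N by simp
      have le: "a1 \<le> N" "a2 \<le> N" using a unfolding bad_def by auto
      have "1 \<le> \<bar>real a1 - real a2\<bar>" using a(3) by linarith
      then have d: "1 / real N \<le> \<bar>real a1 / real N - real a2 / real N\<bar>"
        using Npos by (simp add: diff_divide_distrib[symmetric] abs_divide divide_right_mono)
      have r: "0 \<le> real a1 / real N" "real a1 / real N \<le> 1" "0 \<le> real a2 / real N" "real a2 / real N \<le> 1"
        using le Npos by (auto simp: field_simps)
      from one_form[OF N r d, of "v0 j" "v1 j"] a(1,2) show False unfolding bad_def by auto
    qed
    then show ?thesis using card_le_Suc0_iff_eq[OF fin] by simp
  qed
  have "card (\<Union>j<N. bad j) \<le> (\<Sum>j<N. card (bad j))" by (rule card_UN_le) simp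
  also have "\<dots> \<le> (\<Sum>j<N. 1)" by (rule sum_mono) (rule c1)
  also have "\<dots> = N" by simp
  finally have cU: "card (\<Union>j<N. bad j) \<le> N" .
  have "\<not> {0..N} \<subseteq> (\<Union>j<N. bad j)"
  proof
    assume "{0..N} \<subseteq> (\<Union>j<N. bad j)"
    then have "card {0..N} \<le> card (\<Union>j<N. bad j)" by (rule card_mono[rotated]) (simp add: fin)
    then show False using cU by simp
  qed
  then obtain i where i: "i \<in> {0..N}" "i \<notin> (\<Union>j<N. bad j)" by blast
  show ?thesis
  proof (intro exI[of _ i] conjI allI impI)
    show "i \<le> N" using i by simp
    fix j assume "j < N"
    then have "i \<notin> bad j" using i by blast
    then show "cmod (v0 j + of_real (real i / real N) * v1 j) \<ge> max (cmod (v0 j)) (cmod (v1 j)) / (4 * real N)"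
      using i unfolding bad_def by auto
  qed
qed




lemma v_nonzero:
  fixes A :: "complex mat"
  assumes A: "A \<in> carrier_mat 2 2" "det A = 1"
  shows "max (cmod (A $$ (0,0) * x + A $$ (0,1))) (cmod (A $$ (1,0) * x + A $$ (1,1))) > 0"
proof (rule ccontr)
  assume "\<not> ?thesis"
  then have "A $$ (0,0) * x + A $$ (0,1) = 0" "A $$ (1,0) * x + A $$ (1,1) = 0"
    by (auto simp: max_def split: if_splits)
  then have "A $$ (0,1) = - A $$ (0,0) * x" "A $$ (1,1) = - A $$ (1,0) * x"
    by (auto simp: add_eq_0_iff)
  then have "A $$ (0,0) * A $$ (1,1) - A $$ (0,1) * A $$ (1,0) = 0" by (simp add: algebra_simps)
  then show False using det2[OF A(1)] A(2) by simp
qed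

lemma nullcone_back:
  fixes bs :: "(nat \<times> complex) list"
  assumes n: "n = sum_list (map fst bs)" "n > 0"
    and nc: "in_null_cone n (pencil_state n (jordan_matrix bs) (1\<^sub>m n))"
  shows "in_null_cone n (pencil_state n (Dmat n (\<lambda>i. dl bs ! i)) (1\<^sub>m n))"
  unfolding in_null_cone_def
proof (rule closure_coordI)
  let ?\<psi> = "pencil_state n (jordan_matrix bs) (1\<^sub>m n)"
  let ?\<psi>' = "pencil_state n (Dmat n (\<lambda>i. dl bs ! i)) (1\<^sub>m n)"
  fix \<epsilon> :: real assume eps: "\<epsilon> > 0"
  define C0 where "C0 = fact n * (8 * real n) ^ n"
  have C0: "C0 \<ge> 0" unfolding C0_def by simp
  define \<eta> where "\<eta> = \<epsilon> / (C0 + 1)"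
  have eta: "\<eta> > 0" unfolding \<eta>_def using eps C0 by simp
  have C0eta: "C0 * \<eta> ^ n < \<epsilon> ^ n"
  proof -
    have "C0 + 1 \<le> (C0 + 1) ^ n" by (rule self_le_power) (use C0 n in auto)
    then have "C0 < (C0 + 1) ^ n" by simp
    then have "C0 * \<epsilon> ^ n < (C0 + 1) ^ n * \<epsilon> ^ n" using eps by (intro mult_strict_right_mono) auto
    then show ?thesis unfolding \<eta>_def using C0 by (simp add: power_divide field_simps)
  qed
  have "(\<lambda>_ _ _. 0) \<in> closure (SLOCC_orbit n ?\<psi>)" using nc unfolding in_null_cone_def .
  from closure_coordD[OF this eta, of n] obtain T0 where T0: "T0 \<in> SLOCC_orbit n ?\<psi>"
    and small: "\<forall>a<2. \<forall>j<n. \<forall>k<n. cmod (T0 a j k - 0) < \<eta>" by auto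
  from T0 obtain A B C where G: "(A, B, C) \<in> SLOCC_group n" and T0e: "T0 = tensor_act n A B C ?\<psi>"
    unfolding SLOCC_orbit_def by auto
  have A: "A \<in> carrier_mat 2 2" and dA: "det A = 1" using G unfolding SLOCC_group_def by auto
  define v0 where "v0 j = A $$ (0,0) * dl bs ! j + A $$ (0,1)" for j
  define v1 where "v1 j = A $$ (1,0) * dl bs ! j + A $$ (1,1)" for j
  define Mj where "Mj j = max (cmod (v0 j)) (cmod (v1 j))" for j
  have Mpos: "Mj j > 0" for j unfolding Mj_def v0_def v1_def by (rule v_nonzero[OF A dA])
  define P where "P = (\<Prod>j<n. Mj j)"
  have Ppos: "P > 0" unfolding P_def using Mpos by (simp add: prod_pos)
  have n1: "n \<ge> 1" using n by simp
  obtain i where i: "i \<le> n" and good: "\<forall>j<n. cmod (v0 j + of_real (real i / real n) * v1 j) \<ge> Mj j / (4 * real n)"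
    using pigeon[OF n1, of v0 v1] unfolding Mj_def by blast
  define la where "la = complex_of_real (real i / real n)"
  have la1: "cmod la \<le> 1"
  proof -
    have "cmod la = \<bar>real i / real n\<bar>" unfolding la_def by (simp only: norm_of_real)
    also have "\<dots> \<le> 1" using i n(2) by simp
    finally show ?thesis .
  qed
  let ?Mat = "mat n n (\<lambda>(j,k). 1 * T0 0 j k + la * T0 1 j k)"
  have detE: "det ?Mat = (\<Prod>j<n. v0 j + la * v1 j)"
    unfolding T0e v0_def v1_def using det_pencil[OF n(1) G, of 1 la] by simp
  have ub: "cmod (det ?Mat) \<le> fact n * (2 * \<eta>) ^ n"
  proof (rule det_bound)
    show "?Mat \<in> carrier_mat n n" by simp
    fix j k assume jk: "j < n" "k < n"
    have "cmod (1 * T0 0 j k + la * T0 1 j k) \<le> cmod (T0 0 j k) + cmod la * cmod (T0 1 j k)"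
      using norm_triangle_ineq[of "T0 0 j k" "la * T0 1 j k"] by (simp add: norm_mult)
    also have "\<dots> \<le> \<eta> + 1 * \<eta>"
    proof (rule add_mono)
      show "cmod (T0 0 j k) \<le> \<eta>" using small jk by (simp add: less_imp_le)
      show "cmod la * cmod (T0 1 j k) \<le> 1 * \<eta>"
        using small jk la1 by (intro mult_mono) (auto simp: less_imp_le)
    qed
    finally show "cmod (?Mat $$ (j,k)) \<le> 2 * \<eta>" using jk by simp
  qed
  have lb: "P / (4 * real n) ^ n \<le> cmod (det ?Mat)"
  proof -
    have "P / (4 * real n) ^ n = (\<Prod>j<n. Mj j / (4 * real n))"
      unfolding P_def by (simp add: prod_dividef)
    also have "\<dots> \<le> (\<Prod>j<n. cmod (v0 j + la * v1 j))"
    proof (rule prod_mono)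
      fix j assume "j \<in> {..<n}"
      then show "0 \<le> Mj j / (4 * real n) \<and> Mj j / (4 * real n) \<le> cmod (v0 j + la * v1 j)"
        using good Mpos[of j] unfolding la_def by (auto simp: less_imp_le)
    qed
    also have "\<dots> = cmod (det ?Mat)" unfolding detE by (simp add: prod_norm)
    finally show ?thesis .
  qed
  have "P \<le> C0 * \<eta> ^ n"
  proof -
    have "P / (4 * real n) ^ n \<le> fact n * (2 * \<eta>) ^ n" using lb ub by linarith
    then have "P \<le> fact n * (2 * \<eta>) ^ n * (4 * real n) ^ n" using n by (simp add: field_simps)
    also have "\<dots> = C0 * \<eta> ^ n"
    proof -
      have e8: "(2::real) ^ n * 4 ^ n = 8 ^ n"
      proof -
        have "(2::real) ^ n * 4 ^ n = (2 * 4) ^ n" by (rule power_mult_distrib[symmetric])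
        then show ?thesis by simp
      qed
      show ?thesis unfolding C0_def by (simp add: power_mult_distrib algebra_simps e8)
    qed
    finally show ?thesis .
  qed
  with C0eta have Pe: "P < \<epsilon> ^ n" by simp
  define r where "r = root n P"
  have r: "r > 0" unfolding r_def using Ppos n by simp
  have rn: "r ^ n = P" unfolding r_def using Ppos n by simp
  have re: "r < \<epsilon>"
  proof -
    have "root n P < root n (\<epsilon> ^ n)" by (rule real_root_less_mono[OF n(2) Pe])
    then show ?thesis unfolding r_def using real_root_power_cancel[OF n(2), of \<epsilon>] eps by simp
  qed
  define u where "u j = complex_of_real (r / Mj j)" for j
  have pu: "(\<Prod>j<n. u j) = 1"
  proof -
    have "(\<Prod>j<n. r / Mj j) = r ^ n / P" unfolding P_def by (simp add: prod_dividef)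
    also have "\<dots> = 1" using rn Ppos by simp
    finally have "(\<Prod>j<n. r / Mj j) = 1" .
    moreover have "(\<Prod>j<n. u j) = complex_of_real (\<Prod>j<n. r / Mj j)"
      unfolding u_def by (rule of_real_prod[symmetric])
    ultimately show ?thesis by simp
  qed
  have p1: "(\<Prod>j<n. (1::complex)) = 1" by simp
  have G': "(A, 1\<^sub>m n, 1\<^sub>m n) \<in> SLOCC_group n" unfolding SLOCC_group_def using A dA by simp
  let ?T = "tensor_act n A (1\<^sub>m n) (1\<^sub>m n) (\<lambda>a j k. u j * 1 * ?\<psi>' a j k)"
  have "?T \<in> SLOCC_orbit n ?\<psi>'"
    by (rule scale_orbit[of A "1\<^sub>m n" "1\<^sub>m n" n u "\<lambda>_. 1" ?\<psi>', OF G' pu p1])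
  moreover have "\<forall>a<2. \<forall>j<n. \<forall>k<n. cmod (?T a j k - (\<lambda>_ _ _. 0) a j k) < \<epsilon>"
  proof (intro allI impI)
    fix a j k assume h: "a < (2::nat)" "j < n" "k < n"
    have Te: "?T a j k = (\<Sum>a'<2. A $$ (a,a') * (u j * 1 * ?\<psi>' a' j k))"
      by (rule tensor_A_only[OF h])
    show "cmod (?T a j k - (\<lambda>_ _ _. 0) a j k) < \<epsilon>"
    proof (cases "j = k")
      case False
      then show ?thesis unfolding Te using h eps by (simp add: pencil_state_def)
    next
      case True
      have Teq: "?T a j k = u j * (A $$ (a,0) * dl bs ! j + A $$ (a,1))"
        unfolding Te using h True by (simp add: pencil_state_def numeral_2_eq_2 lessThan_Suc algebra_simps)
      have wle: "cmod (A $$ (a,0) * dl bs ! j + A $$ (a,1)) \<le> Mj j"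
      proof (cases "a = 0")
        case True then show ?thesis unfolding Mj_def v0_def by simp
      next
        case False then have "a = 1" using h by simp
        then show ?thesis unfolding Mj_def v1_def by simp
      qed
      have cu: "cmod (u j) = r / Mj j"
      proof -
        have "cmod (u j) = \<bar>r / Mj j\<bar>" by (simp only: u_def norm_of_real)
        then show ?thesis using r Mpos[of j] by simp
      qed
      have "cmod (?T a j k) = cmod (u j) * cmod (A $$ (a,0) * dl bs ! j + A $$ (a,1))"
        by (simp only: Teq norm_mult)
      also have "\<dots> \<le> r / Mj j * Mj j"
        unfolding cu by (rule mult_left_mono[OF wle]) (use r Mpos[of j] in simp)
      also have "\<dots> = r" using Mpos[of j] by simp
      finally show ?thesis using re by simp
    qed
  qed
  ultimately show "\<exists>T\<in>SLOCC_orbit n ?\<psi>'. \<forall>a<2. \<forall>j<n. \<forall>k<n. cmod (T a j k - (\<lambda>_ _ _. 0) a j k) < \<epsilon>"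
    by blast
next
  fix T assume "T \<in> SLOCC_orbit n (pencil_state n (Dmat n (\<lambda>i. dl bs ! i)) (1\<^sub>m n))"
  then show "vanish n T" unfolding SLOCC_orbit_def by (auto simp: vanish_tensor)
next
  show "vanish n (\<lambda>_ _ _. 0)" unfolding vanish_def by simp
qed




lemma concat_replicate_same: "concat (map (\<lambda>j. replicate (f j) c) xs) = replicate (sum_list (map f xs)) c"
  by (induct xs) (simp_all add: replicate_add)

lemma sum_list_upt_lessThan: "sum_list (map f [0..<k]) = (\<Sum>j<k. f j)"
  by (induct k) simp_all

theorem mainTheorem9:
  fixes n l :: nat and x :: "nat \<Rightarrow> complex" and r :: "nat \<Rightarrow> nat"
    and e :: "nat \<Rightarrow> nat \<Rightarrow> nat" and m :: "nat \<Rightarrow> nat"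
  assumes n2: "n \<ge> 2"
    and distinct: "\<And>i i'. i < l \<Longrightarrow> i' < l \<Longrightarrow> i \<noteq> i' \<Longrightarrow> x i \<noteq> x i'"
    and r_pos: "\<And>i. i < l \<Longrightarrow> r i \<ge> 1"
    and e_pos: "\<And>i j. i < l \<Longrightarrow> j < r i \<Longrightarrow> e i j > 0"
    and m_def: "\<And>i. m i = (\<Sum>j<r i. e i j)"
    and n_def: "(\<Sum>i<l. m i) = n"
    and some_gt1: "\<exists>i<l. \<exists>j<r i. e i j > 1"
  defines "P \<equiv> M_pencil_sum (concat (map (\<lambda>i. map (\<lambda>j. (e i j, x i)) [0..<r i]) [0..<l]))"
    and "P' \<equiv> M_pencil_sum (concat (map (\<lambda>i. replicate (m i) (1, x i)) [0..<l]))"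
  defines "\<psi> \<equiv> pencil_state n (fst P) (snd P)"
    and "\<psi>' \<equiv> pencil_state n (fst P') (snd P')"
  shows "(semistable n \<psi>' \<longrightarrow> strictly_semistable n \<psi>)
       \<and> (in_null_cone n \<psi>' \<longrightarrow> in_null_cone n \<psi>)"
proof -
  define bs where "bs = concat (map (\<lambda>i. map (\<lambda>j. (e i j, x i)) [0..<r i]) [0..<l])"
  define bs' where "bs' = concat (map (\<lambda>i. replicate (m i) (1::nat, x i)) [0..<l])"
  have mi: "sum_list (map (e i) [0..<r i]) = m i" for i
    using m_def[of i] by (simp add: sum_list_upt_lessThan)
  have dl1: "dl bs = concat (map (\<lambda>i. replicate (m i) (x i)) [0..<l])"
  proof -
    have dl_app: "dl (xs @ ys) = dl xs @ dl ys" for xs ys by (simp add: dl_def)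
    have dl_concat: "dl (concat L) = concat (map dl L)" for L
      by (induct L) (simp_all add: dl_app, simp add: dl_def)
    have "dl bs = concat (map (\<lambda>i. concat (map (\<lambda>j. replicate (e i j) (x i)) [0..<r i])) [0..<l])"
      unfolding bs_def dl_concat by (simp add: dl_def comp_def)
    also have "\<dots> = concat (map (\<lambda>i. replicate (m i) (x i)) [0..<l])"
      by (simp add: concat_replicate_same mi)
    finally show ?thesis .
  qed
  have bs'eq: "bs' = map (\<lambda>g. (1::nat, g)) (dl bs)"
    unfolding bs'_def dl1 by (simp add: map_concat comp_def map_replicate)
  have nbs: "sum_list (map fst bs) = n"
  proof -
    have "sum_list (map fst bs) = sum_list (map (\<lambda>i. sum_list (map (e i) [0..<r i])) [0..<l])"
    proof -
      have sl: "sum_list (concat L) = sum_list (map sum_list L)" for L :: "nat list list"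
        by (induct L) simp_all
      show ?thesis unfolding bs_def by (simp add: map_concat sl comp_def)
    qed
    also have "\<dots> = (\<Sum>i<l. m i)" by (simp add: sum_list_upt_lessThan m_def)
    finally show ?thesis using n_def by simp
  qed
  have ldl: "length (dl bs) = n" using length_dl[of bs] nbs by simp
  have slg: "sum_list (map fst (map (\<lambda>g. (1::nat, g)) gs)) = length gs" for gs :: "complex list"
    by (induct gs) auto
  have nbs': "sum_list (map fst bs') = n" unfolding bs'eq slg using ldl .
  have n: "n = sum_list (map fst bs)" "n > 0" using nbs n2 by auto
  have Pe: "fst P = jordan_matrix bs" "snd P = 1\<^sub>m n"
    unfolding P_def M_pencil_sum_def bs_def[symmetric] using nbs by auto
  have JD: "jordan_matrix bs' = Dmat n (\<lambda>i. dl bs ! i)"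
  proof (rule eq_matI)
    fix i j assume "i < dim_row (Dmat n (\<lambda>i. dl bs ! i))" "j < dim_col (Dmat n (\<lambda>i. dl bs ! i))"
    then have ij: "i < n" "j < n" by auto
    show "jordan_matrix bs' $$ (i,j) = Dmat n (\<lambda>i. dl bs ! i) $$ (i,j)"
      unfolding bs'eq using jm_ones[of i "dl bs" j] ij ldl by simp
  qed (use nbs' in auto)
  have P'e: "fst P' = Dmat n (\<lambda>i. dl bs ! i)" "snd P' = 1\<^sub>m n"
    unfolding P'_def M_pencil_sum_def bs'_def[symmetric] using nbs' JD by auto
  have psi: "\<psi> = pencil_state n (jordan_matrix bs) (1\<^sub>m n)" unfolding \<psi>_def Pe ..
  have psi': "\<psi>' = pencil_state n (Dmat n (\<lambda>i. dl bs ! i)) (1\<^sub>m n)" unfolding \<psi>'_def P'e ..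
  have nz: "0 \<notin> fst ` set bs" unfolding bs_def using e_pos by fastforce
  obtain i0 j0 where ij0: "i0 < l" "j0 < r i0" "e i0 j0 > 1" using some_gt1 by blast
  have big: "(e i0 j0, x i0) \<in> set bs"
  proof -
    have m1: "(e i0 j0, x i0) \<in> set (map (\<lambda>j. (e i0 j, x i0)) [0..<r i0])" using ij0 by simp
    have m2: "map (\<lambda>j. (e i0 j, x i0)) [0..<r i0] \<in> set (map (\<lambda>i. map (\<lambda>j. (e i j, x i)) [0..<r i]) [0..<l])"
      unfolding set_map by (rule imageI) (use ij0 in simp)
    show ?thesis unfolding bs_def set_concat by (rule UN_I[where B=set, OF m2 m1])
  qed
  have notin: "\<psi>' \<notin> SLOCC_orbit n \<psi>"
    unfolding psi psi' by (rule not_in_orbit[OF n(1) nz big ij0(3)])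
  have incl: "\<psi>' \<in> closure (SLOCC_orbit n \<psi>)"
    unfolding psi psi' by (rule psi'_in_closure[OF n])
  show ?thesis
  proof (intro conjI impI)
    assume ss: "semistable n \<psi>'"
    have s1: "semistable n \<psi>"
      unfolding semistable_def
    proof
      assume "in_null_cone n \<psi>"
      then have "in_null_cone n \<psi>'" unfolding psi psi' by (rule nullcone_back[OF n])
      then show False using ss unfolding semistable_def by simp
    qed
    have "\<not> closed (SLOCC_orbit n \<psi>)"
    proof
      assume "closed (SLOCC_orbit n \<psi>)"
      then have "closure (SLOCC_orbit n \<psi>) = SLOCC_orbit n \<psi>" by (rule closure_closed)
      then show False using incl notin by simp
    qed
    then show "strictly_semistable n \<psi>"
      unfolding strictly_semistable_def polystable_def using s1 by simp
  next
    assume "in_null_cone n \<psi>'"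
    then show "in_null_cone n \<psi>" unfolding psi psi' by (rule nullcone_transfer[OF n])
  qed
qed


end
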